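(* Let $F \in \mathbb{C}^{n \times n}$ be a unitary matrix with $|F_{ij}|^2 \leq \frac{c}{n}$ for all $i,j$ (for some constant $c>0$), let $I\in\mathbb{C}^{n\times n}$ be the identity, and let $A = [F \enspace I] \in \mathbb{C}^{n \times 2n}$. Let $1 \leq k,t \leq n$ be integers, let $\hat{x}\in\mathbb{C}^n$, let $e \in \mathbb{C}^n$ be $t$-sparse, and let $y = F\hat{x} + e$. Define $$\delta_{k,t} = \sqrt{\frac{ckt}{n}}, \quad \beta = \sqrt{\frac{\max\{k,t\}c}{n}}, \quad \theta = \frac{\sqrt{k+t}}{1- \delta_{k,t}}\beta, \quad \tau = \frac{\sqrt{1 + \delta_{k,t}}}{1 - \delta_{k,t}}.$$ If $0 < \delta_{k,t} < 1$ and $0 < \theta < 1$, then for any solution $x^{\#}$ of the Basis Pursuit problem $\min_{z \in \mathbb{C}^{2n}} \|z\|_1$ subject to $\|Az - y\|_2 \leq \|\hat{x}_{t(k)}\|_2$, writing $x^{\#} = [\hat{x}^{\#} \enspace e^{\#}]^T$ with $\hat{x}^{\#}, e^{\#}\in\mathbb{C}^n$, we have $$\|\hat{x}^{\#} - \hat{x}_{h(k)}\|_2 \leq \left(\frac{2\tau \sqrt{k+t}}{1-\theta} \left(1 + \frac{\beta}{1 - \delta_{k,t}} \right) + 2 \tau \right)\|\hat{x}_{t(k)}\|_2 .$$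
   Context: A vector is $t$-sparse if it has at most $t$ nonzero entries. For $x \in \mathbb{C}^n$, $x_{h(k)}$ denotes a $k$-sparse vector consisting of $k$ largest (in absolute value) entries of $x$ with all other entries zero, and $x_{t(k)} := x - x_{h(k)}$. *)

theory Defs
  imports "HOL-Analysis.Analysis"
begin

definition cnj_transpose :: "complex^'n^'m \<Rightarrow> complex^'m^'n" where
  "cnj_transpose F = (\<chi> i j. cnj (F $ j $ i))"

definition unitary_mat :: "complex^'n^'n \<Rightarrow> bool" where
  "unitary_mat F \<longleftrightarrow> F ** cnj_transpose F = mat 1 \<and> cnj_transpose F ** F = mat 1"

text \<open>l1 norm of a complex vector; the l2 norm is the library norm on complex^'n.\<close>
definition l1norm :: "complex^'n \<Rightarrow> real" where
  "l1norm x = (\<Sum>i\<in>UNIV. cmod (x $ i))"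

definition sparse :: "nat \<Rightarrow> complex^'n \<Rightarrow> bool" where
  "sparse t x \<longleftrightarrow> card {i. x $ i \<noteq> 0} \<le> t"

definition is_head :: "nat \<Rightarrow> complex^'n \<Rightarrow> complex^'n \<Rightarrow> bool" where
  "is_head k x xh \<longleftrightarrow> (\<exists>S. card S = k \<and>
      (\<forall>i. xh $ i = (if i \<in> S then x $ i else 0)) \<and>
      (\<forall>i\<in>S. \<forall>j. j \<notin> S \<longrightarrow> cmod (x $ j) \<le> cmod (x $ i)))"

text \<open>z = [u; v] in C^{2n}, A = [F I], so A z = F u + v and ||z||_1 = ||u||_1 + ||v||_1.
  (u,v) solves min ||z||_1 s.t. ||A z - y||_2 \<le> eta.\<close>
definition is_BP_solution :: "complex^'n^'n \<Rightarrow> complex^'n \<Rightarrow> real \<Rightarrow> complex^'n \<Rightarrow> complex^'n \<Rightarrow> bool" where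
  "is_BP_solution F y eta u v \<longleftrightarrow>
     norm (F *v u + v - y) \<le> eta \<and>
     (\<forall>u' v'. norm (F *v u' + v' - y) \<le> eta \<longrightarrow> l1norm u + l1norm v \<le> l1norm u' + l1norm v')"

end

theory Submission
  imports Defs
begin

lemma norm_cvec: "norm (x::complex^'n) = sqrt (\<Sum>i\<in>UNIV. (cmod (x$i))\<^sup>2)"
  by (simp add: norm_vec_def L2_set_def)

lemma l1_le_sqrt_card:
  fixes x :: "complex^'n"
  assumes "\<forall>i. i \<notin> S \<longrightarrow> x$i = 0"
  shows "l1norm x \<le> sqrt (card S) * norm x"
proof -
  have fin: "finite S" by simp
  have e1: "l1norm x = (\<Sum>i\<in>S. cmod (x$i))"
    unfolding l1norm_def by (rule sum.mono_neutral_right[of UNIV S]) (use assms in auto)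
  have e2: "(\<Sum>i\<in>UNIV. (cmod (x$i))\<^sup>2) = (\<Sum>i\<in>S. (cmod (x$i))\<^sup>2)"
    by (rule sum.mono_neutral_right[of UNIV S]) (use assms in auto)
  have "(\<Sum>i\<in>S. 1 * cmod (x$i))\<^sup>2 \<le> (\<Sum>i\<in>S. 1\<^sup>2) * (\<Sum>i\<in>S. (cmod (x$i))\<^sup>2)"
    by (rule Cauchy_Schwarz_ineq_sum)
  hence "(l1norm x)\<^sup>2 \<le> card S * (norm x)\<^sup>2"
    using e1 e2 by (simp add: norm_cvec sum_nonneg)
  hence "sqrt ((l1norm x)\<^sup>2) \<le> sqrt (card S * (norm x)\<^sup>2)" by (rule real_sqrt_le_mono)
  moreover have "l1norm x \<ge> 0" unfolding l1norm_def by (simp add: sum_nonneg)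
  ultimately show ?thesis by (simp add: real_sqrt_mult)
qed

lemma norm_le_l1: "norm (x::complex^'n) \<le> l1norm x"
  unfolding l1norm_def norm_vec_def by (rule L2_set_le_sum) simp

lemma inner_cvec: "inner (x::complex^'n) y = Re (\<Sum>i\<in>UNIV. x$i * cnj (y$i))"
  by (simp add: inner_vec_def inner_complex_def Re_sum)

lemma unitary_cinner:
  fixes F :: "complex^'n^'n"
  assumes "unitary_mat F"
  shows "(\<Sum>i\<in>UNIV. (F *v p)$i * cnj ((F *v q)$i)) = (\<Sum>j\<in>UNIV. p$j * cnj (q$j))"
proof -
  have M: "(\<Sum>i\<in>UNIV. cnj (F$i$l) * F$i$j) = (if l = j then 1 else 0)" for l j
  proof -
    have "(cnj_transpose F ** F) $ l $ j = (mat 1 :: complex^'n^'n) $ l $ j"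
      using assms unfolding unitary_mat_def by simp
    thus ?thesis by (simp add: matrix_matrix_mult_def cnj_transpose_def mat_def)
  qed
  have "(\<Sum>i\<in>UNIV. (F *v p)$i * cnj ((F *v q)$i))
      = (\<Sum>i\<in>UNIV. \<Sum>l\<in>UNIV. \<Sum>j\<in>UNIV. p$j * cnj (q$l) * (cnj (F$i$l) * F$i$j))"
    by (simp add: matrix_vector_mult_def sum_distrib_left sum_distrib_right cnj_sum mult_ac)
  also have "\<dots> = (\<Sum>l\<in>UNIV. \<Sum>i\<in>UNIV. \<Sum>j\<in>UNIV. p$j * cnj (q$l) * (cnj (F$i$l) * F$i$j))"
    by (rule sum.swap)
  also have "\<dots> = (\<Sum>l\<in>UNIV. \<Sum>j\<in>UNIV. \<Sum>i\<in>UNIV. p$j * cnj (q$l) * (cnj (F$i$l) * F$i$j))"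
    by (rule sum.cong[OF refl], rule sum.swap)
  also have "\<dots> = (\<Sum>l\<in>UNIV. \<Sum>j\<in>UNIV. p$j * cnj (q$l) * (if l = j then 1 else 0))"
    by (simp add: sum_distrib_left[symmetric] M)
  also have "\<dots> = (\<Sum>j\<in>UNIV. p$j * cnj (q$j))"
    by (simp add: if_distrib cong: if_cong)
  finally show ?thesis .
qed

lemma unitary_inner:
  assumes "unitary_mat F"
  shows "inner (F *v p) (F *v q) = inner p q"
  using unitary_cinner[OF assms] by (simp add: inner_cvec)

lemma unitary_norm:
  assumes "unitary_mat F"
  shows "norm (F *v p) = norm p"
  using unitary_inner[OF assms] by (simp add: norm_eq_sqrt_inner)

lemma cross_bound:
  fixes F :: "complex^'n^'n"
  assumes "\<forall>i j. cmod (F$i$j) \<le> mu"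
  shows "\<bar>inner (F *v p) q\<bar> \<le> mu * l1norm p * l1norm q"
proof -
  have "\<bar>inner (F *v p) q\<bar> \<le> (\<Sum>i\<in>UNIV. \<bar>inner ((F *v p)$i) (q$i)\<bar>)"
    unfolding inner_vec_def by (rule sum_abs)
  also have "\<dots> \<le> (\<Sum>i\<in>UNIV. (mu * l1norm p) * cmod (q$i))"
  proof (rule sum_mono)
    fix i
    have "cmod ((F *v p)$i) \<le> (\<Sum>j\<in>UNIV. cmod (F$i$j * p$j))"
      unfolding matrix_vector_mult_def by (simp add: norm_sum)
    also have "\<dots> \<le> (\<Sum>j\<in>UNIV. mu * cmod (p$j))"
      by (rule sum_mono) (simp add: norm_mult assms mult_right_mono)
    finally have a: "cmod ((F *v p)$i) \<le> mu * l1norm p"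
      unfolding l1norm_def by (simp add: sum_distrib_left)
    have "\<bar>inner ((F *v p)$i) (q$i)\<bar> \<le> cmod ((F *v p)$i) * cmod (q$i)"
      by (rule Cauchy_Schwarz_ineq2)
    also have "\<dots> \<le> (mu * l1norm p) * cmod (q$i)"
      using a by (simp add: mult_right_mono)
    finally show "\<bar>inner ((F *v p)$i) (q$i)\<bar> \<le> (mu * l1norm p) * cmod (q$i)" .
  qed
  also have "\<dots> = mu * l1norm p * l1norm q"
    unfolding l1norm_def by (simp add: sum_distrib_left)
  finally show ?thesis .
qed


lemma final_alg:
  fixes d b s th ta W eta N U :: real
  assumes "0 < d" "d < 1" "0 < th" "th < 1" "s > 0" "th = s / (1 - d) * b"
    "ta = sqrt (1 + d) / (1 - d)" "W \<le> 2 * eta" "0 \<le> W" "0 \<le> N" "U \<le> (1 + s) * N"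
    "N * ((1 - d) - b * s) \<le> sqrt (1 + d) * W"
  shows "U \<le> (2 * ta * s / (1 - th) * (1 + b / (1 - d)) + 2 * ta) * eta"
proof -
  have e1: "(1 - d) - b * s = (1 - d) * (1 - th)" using assms(2,6) by (simp add: field_simps)
  have pos: "(1 - d) * (1 - th) > 0" using assms by simp
  have "N \<le> sqrt (1 + d) * W / ((1 - d) * (1 - th))"
    using assms(12) e1 pos by (simp add: pos_le_divide_eq)
  also have "\<dots> = ta * W / (1 - th)" using assms(7) by simp
  finally have N: "N \<le> ta * W / (1 - th)" .
  have tapos: "ta \<ge> 0" using assms by simp
  have "U \<le> (1 + s) * (ta * W / (1 - th))"
    using assms(11) N assms(5) by (meson add_nonneg_nonneg less_imp_le mult_left_mono order_trans zero_le_one)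
  also have "\<dots> \<le> (1 + s) * (ta * (2 * eta) / (1 - th))"
    using assms tapos by (intro mult_left_mono divide_right_mono) auto
  also have "\<dots> = (2 * ta * s / (1 - th) * (1 + b / (1 - d)) + 2 * ta) * eta"
  proof -
    have "s * (1 + b / (1 - d)) = s + th" using assms(2,6) by (simp add: field_simps)
    hence "2 * ta * s / (1 - th) * (1 + b / (1 - d)) = 2 * ta * (s + th) / (1 - th)"
      by (metis (no_types, lifting) mult.assoc times_divide_eq_left times_divide_eq_right mult.commute)
    thus ?thesis using assms(4) by (simp add: field_simps)
  qed
  finally show ?thesis .
qed

lemma cs2: "sqrt (real k) * x + sqrt (real t) * y \<le> sqrt (real k + real t) * sqrt (x\<^sup>2 + y\<^sup>2)"
  if "x \<ge> 0" "y \<ge> 0" for x y :: real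
proof -
  have "(sqrt k * x + sqrt t * y)\<^sup>2 \<le> (k + t) * (x\<^sup>2 + y\<^sup>2)"
  proof -
    have "0 \<le> (sqrt k * y - sqrt t * x)\<^sup>2" by simp
    thus ?thesis by (simp add: power2_eq_square algebra_simps)
  qed
  hence "sqrt ((sqrt k * x + sqrt t * y)\<^sup>2) \<le> sqrt ((k + t) * (x\<^sup>2 + y\<^sup>2))"
    by (rule real_sqrt_le_mono)
  thus ?thesis using that by (simp add: real_sqrt_mult)
qed


theorem theorem2:
  fixes F :: "complex^'n^'n" and c :: real and k t :: nat
    and xhat e xs es xh :: "complex^'n"
  assumes "unitary_mat F"
    and "c > 0"
    and "\<forall>i j. (cmod (F $ i $ j))\<^sup>2 \<le> c / real CARD('n)"
    and "1 \<le> k" "k \<le> CARD('n)" "1 \<le> t" "t \<le> CARD('n)"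
    and "sparse t e"
    and "is_head k xhat xh"
    and "0 < sqrt (c * k * t / CARD('n))"
    and "sqrt (c * k * t / CARD('n)) < 1"
    and "0 < sqrt (k + t) / (1 - sqrt (c * k * t / CARD('n))) * sqrt (max k t * c / CARD('n))"
    and "sqrt (k + t) / (1 - sqrt (c * k * t / CARD('n))) * sqrt (max k t * c / CARD('n)) < 1"
    and "is_BP_solution F (F *v xhat + e) (norm (xhat - xh)) xs es"
  shows "let n = real CARD('n);
             \<delta> = sqrt (c * k * t / n);
             \<beta> = sqrt (max k t * c / n);
             \<theta> = sqrt (k + t) / (1 - \<delta>) * \<beta>;
             \<tau> = sqrt (1 + \<delta>) / (1 - \<delta>)
         in norm (xs - xh) \<le>
            (2 * \<tau> * sqrt (k + t) / (1 - \<theta>) * (1 + \<beta> / (1 - \<delta>)) + 2 * \<tau>) * norm (xhat - xh)"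
proof -
  define n where "n = real CARD('n)"
  define d where "d = sqrt (c * k * t / n)"
  define b where "b = sqrt (max k t * c / n)"
  define th where "th = sqrt (k + t) / (1 - d) * b"
  define ta where "ta = sqrt (1 + d) / (1 - d)"
  define s where "s = sqrt (real k + real t)"
  define mu where "mu = sqrt (c / n)"
  define eta where "eta = norm (xhat - xh)"
  define y where "y = F *v xhat + e"
  have npos: "n > 0" unfolding n_def by simp
  have mu: "\<forall>i j. cmod (F$i$j) \<le> mu"
    using assms(3) unfolding mu_def n_def by (auto intro: real_le_rsqrt)
  have mu0: "mu \<ge> 0" unfolding mu_def using assms(2) npos by simp
  have dmu: "mu * sqrt k * sqrt t = d"
    unfolding mu_def d_def by (simp add: real_sqrt_mult[symmetric] mult_ac)
  have cn: "c / n \<ge> 0" using assms(2) npos by simp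
  have bk: "mu * sqrt k \<le> b"
  proof -
    have h: "real k * (c / n) \<le> real (max k t) * (c / n)" using cn by (intro mult_right_mono) auto
    have e: "mu * sqrt k = sqrt (c / n * k)" unfolding mu_def by (rule real_sqrt_mult[symmetric])
    have "sqrt (c / n * k) \<le> sqrt (max k t * c / n)" by (rule real_sqrt_le_mono) (use h in \<open>simp add: mult_ac\<close>)
    thus ?thesis unfolding e b_def .
  qed
  have bt: "mu * sqrt t \<le> b"
  proof -
    have h: "real t * (c / n) \<le> real (max k t) * (c / n)" using cn by (intro mult_right_mono) auto
    have e: "mu * sqrt t = sqrt (c / n * t)" unfolding mu_def by (rule real_sqrt_mult[symmetric])
    have "sqrt (c / n * t) \<le> sqrt (max k t * c / n)" by (rule real_sqrt_le_mono) (use h in \<open>simp add: mult_ac\<close>)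
    thus ?thesis unfolding e b_def .
  qed
  have b0: "b \<ge> 0" using bk mu0 by (meson order_trans mult_nonneg_nonneg real_sqrt_ge_zero of_nat_0_le_iff)
  obtain S where S: "card S = k" "\<forall>i. xh $ i = (if i \<in> S then xhat $ i else 0)"
    using assms(9) unfolding is_head_def by blast
  define T where "T = {i. e $ i \<noteq> 0}"
  have T: "card T \<le> t" using assms(8) unfolding sparse_def T_def .
  have bp1: "norm (F *v xs + es - y) \<le> eta"
    and bp2: "\<And>u' v'. norm (F *v u' + v' - y) \<le> eta \<Longrightarrow> l1norm xs + l1norm es \<le> l1norm u' + l1norm v'"
    using assms(14) unfolding is_BP_solution_def y_def eta_def by auto
  have feas: "norm (F *v xh + e - y) = eta"
  proof -
    have "F *v xh + e - y = F *v (xh - xhat)"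
      unfolding y_def by (simp add: matrix_vector_mult_diff_distrib)
    thus ?thesis using unitary_norm[OF assms(1)] unfolding eta_def by (simp add: norm_minus_commute)
  qed
  have min: "l1norm xs + l1norm es \<le> l1norm xh + l1norm e"
    using bp2 feas by simp
  define u where "u = xs - xh"
  define v where "v = es - e"
  define a where "a = (\<chi> i. if i \<in> S then u$i else 0)"
  define a' where "a' = (\<chi> i. if i \<in> S then 0 else u$i)"
  define bb where "bb = (\<chi> i. if i \<in> T then v$i else 0)"
  define bb' where "bb' = (\<chi> i. if i \<in> T then 0 else v$i)"
  have uaa: "u = a + a'" unfolding a_def a'_def by (simp add: vec_eq_iff)
  have vbb: "v = bb + bb'" unfolding bb_def bb'_def by (simp add: vec_eq_iff)
  define W where "W = norm (F *v u + v)"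
  have W: "W \<le> 2 * eta"
  proof -
    have "F *v u + v = (F *v xs + es - y) - (F *v xh + e - y)"
      unfolding u_def v_def by (simp add: matrix_vector_mult_diff_distrib)
    hence "W \<le> norm (F *v xs + es - y) + norm (F *v xh + e - y)"
      unfolding W_def by (metis norm_triangle_ineq4)
    thus ?thesis using bp1 feas by simp
  qed
  define L where "L = l1norm a' + l1norm bb'"
  have cone: "L \<le> l1norm a + l1norm bb"
  proof -
    have c1: "cmod (xs$i) \<ge> cmod (xh$i) - cmod (a$i) + cmod (a'$i)" for i
    proof (cases "i \<in> S")
      case True
      hence "xs$i = xh$i + a$i" "a'$i = 0" unfolding a_def a'_def u_def by auto
      thus ?thesis using norm_diff_ineq[of "xh$i" "a$i"] by simp
    next
      case False
      hence "xs$i = a'$i" "a$i = 0" "xh$i = 0" unfolding a_def a'_def u_def using S by auto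
      thus ?thesis by simp
    qed
    have c2: "cmod (es$i) \<ge> cmod (e$i) - cmod (bb$i) + cmod (bb'$i)" for i
    proof (cases "i \<in> T")
      case True
      hence "es$i = e$i + bb$i" "bb'$i = 0" unfolding bb_def bb'_def v_def by auto
      thus ?thesis using norm_diff_ineq[of "e$i" "bb$i"] by simp
    next
      case False
      hence "es$i = bb'$i" "bb$i = 0" "e$i = 0" unfolding bb_def bb'_def v_def T_def by auto
      thus ?thesis by simp
    qed
    have "l1norm xh - l1norm a + l1norm a' \<le> l1norm xs"
      unfolding l1norm_def sum_subtractf[symmetric] sum.distrib[symmetric]
      by (rule sum_mono) (use c1 in auto)
    moreover have "l1norm e - l1norm bb + l1norm bb' \<le> l1norm es"
      unfolding l1norm_def sum_subtractf[symmetric] sum.distrib[symmetric]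
      by (rule sum_mono) (use c2 in auto)
    ultimately show ?thesis using min unfolding L_def by linarith
  qed
  define Na where "Na = norm a"
  define Nb where "Nb = norm bb"
  define N where "N = sqrt (Na\<^sup>2 + Nb\<^sup>2)"
  have Na0: "Na \<ge> 0" and Nb0: "Nb \<ge> 0" unfolding Na_def Nb_def by simp_all
  have NaN: "Na \<le> N" and NbN: "Nb \<le> N" unfolding N_def
    using Na0 Nb0 by (auto intro: real_le_rsqrt)
  have N0: "N \<ge> 0" unfolding N_def by simp
  have NN: "N\<^sup>2 = Na\<^sup>2 + Nb\<^sup>2" unfolding N_def by simp
  have l1a: "l1norm a \<le> sqrt k * Na"
    using l1_le_sqrt_card[of S a] S(1) unfolding Na_def a_def by simp
  have l1b: "l1norm bb \<le> sqrt t * Nb"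
  proof -
    have "l1norm bb \<le> sqrt (card T) * Nb"
      using l1_le_sqrt_card[of T bb] unfolding Nb_def bb_def by simp
    also have "\<dots> \<le> sqrt t * Nb" using T Nb0 by (intro mult_right_mono) auto
    finally show ?thesis .
  qed
  have L0: "l1norm a' \<ge> 0" "l1norm bb' \<ge> 0" unfolding l1norm_def by (simp_all add: sum_nonneg)
  have LsN: "L \<le> s * N"
    using cone l1a l1b cs2[OF Na0 Nb0, of k t] unfolding s_def N_def by linarith
  define X where "X = F *v a + bb"
  define Y where "Y = F *v a' + bb'"
  have XY: "F *v u + v = X + Y" unfolding X_def Y_def uaa vbb
    by (simp add: matrix_vector_right_distrib algebra_simps)
  have iFab: "\<bar>inner (F *v a) bb\<bar> \<le> d * Na * Nb"
  proof -
    have "\<bar>inner (F *v a) bb\<bar> \<le> mu * l1norm a * l1norm bb" by (rule cross_bound[OF mu])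
    also have "\<dots> \<le> mu * (sqrt k * Na) * (sqrt t * Nb)"
      using l1a l1b mu0 Na0 by (intro mult_mono mult_left_mono) (auto simp: l1norm_def sum_nonneg)
    also have "\<dots> = d * Na * Nb" using dmu by (simp add: mult_ac)
    finally show ?thesis .
  qed
  have X2: "(norm X)\<^sup>2 = Na\<^sup>2 + Nb\<^sup>2 + 2 * inner (F *v a) bb"
    unfolding X_def Na_def Nb_def power2_norm_eq_inner
    using unitary_inner[OF assms(1), of a a]
    by (simp add: inner_add_left inner_add_right inner_commute)
  have NaNb: "2 * (Na * Nb) \<le> N\<^sup>2" unfolding NN
    using sum_squares_bound[of Na Nb] by (simp add: mult_ac)
  have d0: "d \<ge> 0" unfolding d_def using assms(2) npos by simp
  have Xlow: "(1 - d) * N\<^sup>2 \<le> (norm X)\<^sup>2"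
  proof -
    have h: "2 * (d * Na * Nb) \<le> d * N\<^sup>2" using mult_left_mono[OF NaNb d0] by (simp add: mult_ac)
    have h2: "(1 - d) * N\<^sup>2 = N\<^sup>2 - d * N\<^sup>2" by (simp add: algebra_simps)
    have h3: "- (d * Na * Nb) \<le> inner (F *v a) bb" using iFab by linarith
    show ?thesis using X2 h h2 h3 NN by linarith
  qed
  have Xup: "norm X \<le> sqrt (1 + d) * N"
  proof -
    have h: "2 * (d * Na * Nb) \<le> d * N\<^sup>2" using mult_left_mono[OF NaNb d0] by (simp add: mult_ac)
    have h2: "(1 + d) * N\<^sup>2 = N\<^sup>2 + d * N\<^sup>2" by (simp add: algebra_simps)
    have h3: "inner (F *v a) bb \<le> d * Na * Nb" using iFab by linarith
    have "(norm X)\<^sup>2 \<le> (1 + d) * N\<^sup>2" using X2 h h2 h3 NN by linarith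
    hence "sqrt ((norm X)\<^sup>2) \<le> sqrt ((1 + d) * N\<^sup>2)" by (rule real_sqrt_le_mono)
    thus ?thesis using N0 by (simp add: real_sqrt_mult)
  qed
  have orth1: "inner a a' = 0" unfolding a_def a'_def inner_vec_def by (intro sum.neutral) auto
  have orth2: "inner bb bb' = 0" unfolding bb_def bb'_def inner_vec_def by (intro sum.neutral) auto
  have iXY: "\<bar>inner X Y\<bar> \<le> b * N * L"
  proof -
    have eq: "inner X Y = inner (F *v a) bb' + inner (F *v a') bb"
      unfolding X_def Y_def using unitary_inner[OF assms(1), of a a'] orth1 orth2
      by (simp add: inner_add_left inner_add_right inner_commute)
    have t1: "\<bar>inner (F *v a) bb'\<bar> \<le> b * N * l1norm bb'"
    proof -
      have "\<bar>inner (F *v a) bb'\<bar> \<le> mu * l1norm a * l1norm bb'" by (rule cross_bound[OF mu])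
      also have "\<dots> \<le> mu * (sqrt k * Na) * l1norm bb'"
        using l1a mu0 L0 by (intro mult_right_mono mult_left_mono) auto
      also have "\<dots> = (mu * sqrt k) * Na * l1norm bb'" by simp
      also have "\<dots> \<le> b * N * l1norm bb'"
        using bk NaN L0 Na0 mu0 b0 by (intro mult_right_mono mult_mono) auto
      finally show ?thesis .
    qed
    have t2: "\<bar>inner (F *v a') bb\<bar> \<le> b * N * l1norm a'"
    proof -
      have "\<bar>inner (F *v a') bb\<bar> \<le> mu * l1norm a' * l1norm bb" by (rule cross_bound[OF mu])
      also have "\<dots> \<le> mu * l1norm a' * (sqrt t * Nb)"
        using l1b mu0 L0 by (intro mult_left_mono) auto
      also have "\<dots> = (mu * sqrt t) * Nb * l1norm a'" by simp
      also have "\<dots> \<le> b * N * l1norm a'"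
        using bt NbN L0 Nb0 mu0 b0 by (intro mult_right_mono mult_mono) auto
      finally show ?thesis .
    qed
    have h: "b * N * L = b * N * l1norm bb' + b * N * l1norm a'" unfolding L_def by (simp add: algebra_simps)
    show ?thesis unfolding eq h using t1 t2 abs_triangle_ineq[of "inner (F *v a) bb'" "inner (F *v a') bb"] by linarith
  qed
  have key: "(1 - d) * N\<^sup>2 \<le> sqrt (1 + d) * N * W + b * N * L"
  proof -
    have "(norm X)\<^sup>2 = inner X (X + Y) - inner X Y"
      by (simp add: power2_norm_eq_inner inner_add_right)
    also have "\<dots> \<le> norm X * W + b * N * L"
      using iXY norm_cauchy_schwarz[of X "X + Y"] XY unfolding W_def by simp
    also have "\<dots> \<le> sqrt (1 + d) * N * W + b * N * L"
      using Xup unfolding W_def by (simp add: mult_right_mono)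
    finally show ?thesis using Xlow by linarith
  qed
  have key2: "N * ((1 - d) - b * s) \<le> sqrt (1 + d) * W"
  proof (cases "N = 0")
    case True thus ?thesis unfolding W_def using d0 by simp
  next
    case False
    hence Np: "N > 0" using N0 by simp
    have "b * N * L \<le> b * N * (s * N)" using LsN b0 N0 by (simp add: mult_left_mono)
    hence "N * ((1 - d) * N) \<le> N * (sqrt (1 + d) * W + b * s * N)"
      using key by (simp add: power2_eq_square algebra_simps)
    hence "(1 - d) * N \<le> sqrt (1 + d) * W + b * s * N" using Np by simp
    thus ?thesis by (simp add: algebra_simps)
  qed
  have U: "norm u \<le> (1 + s) * N"
  proof -
    have "norm u \<le> Na + norm a'" unfolding uaa Na_def by (rule norm_triangle_ineq)
    also have "\<dots> \<le> N + L" using NaN norm_le_l1[of a'] L0 unfolding L_def by linarith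
    also have "\<dots> \<le> (1 + s) * N" using LsN by (simp add: algebra_simps)
    finally show ?thesis .
  qed
  have s0: "s > 0" unfolding s_def using assms(4) by simp
  have dd: "0 < d" "d < 1" using assms(10,11) unfolding d_def n_def by simp_all
  have tt: "0 < th" "th < 1" using assms(12,13) unfolding th_def d_def b_def n_def by simp_all
  have ths: "th = s / (1 - d) * b" unfolding th_def s_def by simp
  have W0: "0 \<le> W" unfolding W_def by simp
  have fin: "norm u \<le> (2 * ta * s / (1 - th) * (1 + b / (1 - d)) + 2 * ta) * eta"
    by (rule final_alg[OF dd tt s0 ths ta_def W W0 N0 U key2])
  show ?thesis using fin unfolding Let_def n_def d_def b_def s_def th_def ta_def eta_def u_def
    by simp
qed

end
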